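(* Let $\Omega=(0,\infty)\times\mathbb{R}^n$. The only bounded classical solution of the Cauchy problem $\mathcal{H}u=0$ in $\Omega$, $u(0,x)=0$ for $x\in\mathbb{R}^n$, is $u\equiv0$.
   Context: Let $X_1,\dots,X_m$ be smooth vector fields on $\mathbb{R}^n$, linearly independent in the vector space of smooth vector fields, satisfying: (H.1) there are reals $1=\sigma_1\le\dots\le\sigma_n$ such that, with $\delta_\lambda(x)=(\lambda^{\sigma_1}x_1,\dots,\lambda^{\sigma_n}x_n)$, $X_j(f\circ\delta_\lambda)=\lambda(X_jf)\circ\delta_\lambda$ for all $\lambda>0$, $f\in C^\infty(\mathbb{R}^n)$, $j=1,\dots,m$; (H.2) $\dim\{Y(0):Y\in\mathrm{Lie}\{X_1,\dots,X_m\}\}=n$, where $\mathrm{Lie}\{\cdot\}$ is the smallest Lie subalgebra of smooth vector fields containing the $X_j$. Assume $\dim\mathrm{Lie}\{X_1,\dots,X_m\}>n$. Let $\mathcal{H}=\sum_{j=1}^mX_j^2-\partial_t$ on $\mathbb{R}^{1+n}$. A classical solution is a function $u\in C^2(\Omega)$ with $\mathcal{H}u=0$ on $\Omega$, continuous up to $\overline{\Omega}$, with the prescribed values at $t=0$. *)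

theory Defs
  imports "HOL-Analysis.Analysis"
begin

fun Ck_on :: "nat \<Rightarrow> 'a::euclidean_space set \<Rightarrow> ('a \<Rightarrow> real) \<Rightarrow> bool" where
  "Ck_on 0 S f = continuous_on S f"
| "Ck_on (Suc k) S f =
     ((\<forall>x\<in>S. f differentiable (at x)) \<and>
      (\<forall>b\<in>Basis. Ck_on k S (\<lambda>x. frechet_derivative f (at x) b)))"

definition smooth_fun :: "('a::euclidean_space \<Rightarrow> real) \<Rightarrow> bool" where
  "smooth_fun f \<longleftrightarrow> (\<forall>k. Ck_on k UNIV f)"

type_synonym 'n vf = "real^'n \<Rightarrow> real^'n"

definition smooth_vf :: "'n::finite vf \<Rightarrow> bool" where
  "smooth_vf X \<longleftrightarrow> (\<forall>i. smooth_fun (\<lambda>x. X x $ i))"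

definition vf_act :: "'n::finite vf \<Rightarrow> (real^'n \<Rightarrow> real) \<Rightarrow> real^'n \<Rightarrow> real" where
  "vf_act X f x = frechet_derivative f (at x) (X x)"

definition lie_bracket :: "'n::finite vf \<Rightarrow> 'n vf \<Rightarrow> 'n vf" where
  "lie_bracket X Y x = frechet_derivative Y (at x) (X x) - frechet_derivative X (at x) (Y x)"

inductive_set lie_gen :: "(nat \<Rightarrow> 'n::finite vf) \<Rightarrow> nat \<Rightarrow> 'n vf set"
  for X :: "nat \<Rightarrow> 'n vf" and m :: nat where
  gen: "j < m \<Longrightarrow> X j \<in> lie_gen X m"
| zero: "(\<lambda>x. 0) \<in> lie_gen X m"
| add: "Y \<in> lie_gen X m \<Longrightarrow> Z \<in> lie_gen X m \<Longrightarrow> (\<lambda>x. Y x + Z x) \<in> lie_gen X m"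
| scale: "Y \<in> lie_gen X m \<Longrightarrow> (\<lambda>x. c *\<^sub>R Y x) \<in> lie_gen X m"
| bracket: "Y \<in> lie_gen X m \<Longrightarrow> Z \<in> lie_gen X m \<Longrightarrow> lie_bracket Y Z \<in> lie_gen X m"

definition vf_indep :: "'i set \<Rightarrow> ('i \<Rightarrow> 'n::finite vf) \<Rightarrow> bool" where
  "vf_indep I Y \<longleftrightarrow>
     (\<forall>c. (\<forall>x. (\<Sum>i\<in>I. c i *\<^sub>R Y i x) = 0) \<longrightarrow> (\<forall>i\<in>I. c i = 0))"

definition dil :: "('n::finite \<Rightarrow> real) \<Rightarrow> real \<Rightarrow> real^'n \<Rightarrow> real^'n" where
  "dil \<sigma> r x = (\<chi> i. (r powr \<sigma> i) * x $ i)"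

definition heat_op :: "(nat \<Rightarrow> 'n::finite vf) \<Rightarrow> nat \<Rightarrow> (real \<times> (real^'n) \<Rightarrow> real)
                        \<Rightarrow> real \<times> (real^'n) \<Rightarrow> real" where
  "heat_op X m u p =
     (\<Sum>j<m. vf_act (X j) (\<lambda>y. vf_act (X j) (\<lambda>z. u (fst p, z)) y) (snd p))
     - deriv (\<lambda>s. u (s, snd p)) (fst p)"

end

theory Submission
  imports Defs
begin

lemma lin_expand:
  fixes L :: "real^'n \<Rightarrow> real"
  assumes "linear L"
  shows "L v = (\<Sum>k\<in>UNIV. v$k * L (axis k 1))"
proof -
  have "L v = L (\<Sum>k\<in>UNIV. v$k *\<^sub>R axis k 1)"
    using basis_expansion[of v] by (simp add: scalar_mult_eq_scaleR)
  also have "\<dots> = (\<Sum>k\<in>UNIV. v$k * L (axis k 1))"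
    using assms by (simp add: linear_sum linear_scale)
  finally show ?thesis .
qed

lemma vf_formula:
  assumes "(f has_derivative (\<lambda>v. \<Sum>k\<in>UNIV. v$k * G k y)) (at y)"
  shows "vf_act X f y = (\<Sum>k\<in>UNIV. X y $ k * G k y)"
  unfolding vf_act_def using frechet_derivative_at[OF assms] by metis

lemma vf2_formula:
  fixes X :: "'n::finite vf"
  assumes df: "\<And>y. (f has_derivative (\<lambda>v. \<Sum>k\<in>UNIV. v$k * G k y)) (at y)"
    and dG: "\<And>k. (G k has_derivative G' k) (at x)"
    and dX: "\<And>k. ((\<lambda>y. X y $ k) has_derivative DX k) (at x)"
  shows "vf_act X (vf_act X f) x = (\<Sum>k\<in>UNIV. DX k (X x) * G k x + X x $ k * G' k (X x))"
proof -
  have e: "vf_act X f = (\<lambda>y. \<Sum>k\<in>UNIV. X y $ k * G k y)"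
  proof
    fix y show "vf_act X f y = (\<Sum>k\<in>UNIV. X y $ k * G k y)" by (rule vf_formula[OF df])
  qed
  have "((\<lambda>y. \<Sum>k\<in>UNIV. X y $ k * G k y) has_derivative
     (\<lambda>v. \<Sum>k\<in>UNIV. X x $ k * G' k v + DX k v * G k x)) (at x)"
    by (intro has_derivative_sum has_derivative_mult dX dG)
  from frechet_derivative_at[OF this] show ?thesis
    unfolding e vf_act_def by (metis (no_types, lifting) add.commute sum.cong)
qed

lemma second_order_max:
  fixes F :: "real^'n::finite \<Rightarrow> real" and G G' :: "'n \<Rightarrow> real^'n \<Rightarrow> real"
  assumes dF: "\<And>y. (F has_derivative (\<lambda>v. \<Sum>k\<in>UNIV. v$k * G k y)) (at y)"
    and dG: "\<And>k. (G k has_derivative G' k) (at x0)"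
    and e: "e > 0" and mx: "\<forall>y\<in>ball x0 e. F y \<le> F x0"
  shows "(\<forall>k. G k x0 = 0) \<and> (\<Sum>k\<in>UNIV. a$k * G' k a) \<le> 0"
proof
  have z: "(\<lambda>v. \<Sum>k\<in>UNIV. v$k * G k x0) = (\<lambda>v. 0)"
    by (rule differential_zero_maxmin[OF _ open_ball dF[of x0]]) (use e mx in auto)
  show G0: "\<forall>k. G k x0 = 0"
  proof
    fix k
    have "(\<Sum>i\<in>UNIV. axis k 1 $ i * G i x0) = 0" using fun_cong[OF z, of "axis k (1::real)"] by simp
    then show "G k x0 = 0" by (simp add: axis_def if_distrib[where f="\<lambda>c. c * _"] cong: if_cong)
  qed
  define \<phi> where "\<phi> s = (\<Sum>k\<in>UNIV. a$k * G k (x0 + s *\<^sub>R a))" for s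
  define L where "L = (\<Sum>k\<in>UNIV. a$k * G' k a)"
  have lin: "linear (G' k)" for k using dG[of k] has_derivative_linear by blast
  have dphi: "(\<phi> has_real_derivative L) (at 0)"
  proof -
    have "((\<lambda>s. G k (x0 + s *\<^sub>R a)) has_derivative (\<lambda>h. G' k (h *\<^sub>R a))) (at 0)" for k
    proof -
      have i: "((\<lambda>s. x0 + s *\<^sub>R a) has_derivative (\<lambda>h. h *\<^sub>R a)) (at 0)"
        by (auto intro!: derivative_eq_intros)
      have "(G k has_derivative G' k) (at ((\<lambda>s. x0 + s *\<^sub>R a) 0))" using dG by simp
      from has_derivative_compose[OF i this] show ?thesis by (simp add: o_def)
    qed
    then have "(\<phi> has_derivative (\<lambda>h. \<Sum>k\<in>UNIV. a$k * G' k (h *\<^sub>R a))) (at 0)"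
      unfolding \<phi>_def by (intro has_derivative_sum has_derivative_mult_right) 
    moreover have "(\<lambda>h. \<Sum>k\<in>UNIV. a$k * G' k (h *\<^sub>R a)) = (\<lambda>h. L * h)"
      unfolding L_def using lin by (auto simp: linear_scale sum_distrib_left mult_ac intro!: ext sum.cong)
    ultimately show ?thesis by (simp add: has_field_derivative_def)
  qed
  define g where "g s = F (x0 + s *\<^sub>R a)" for s
  have dg: "(g has_real_derivative \<phi> s) (at s)" for s
  proof -
    have i: "((\<lambda>s. x0 + s *\<^sub>R a) has_derivative (\<lambda>h. h *\<^sub>R a)) (at s)"
      by (auto intro!: derivative_eq_intros)
    from has_derivative_compose[OF i dF]
    have "(g has_derivative (\<lambda>h. \<Sum>k\<in>UNIV. (h *\<^sub>R a)$k * G k (x0 + s *\<^sub>R a))) (at s)"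
      by (simp add: g_def[abs_def] o_def)
    moreover have "(\<lambda>h. \<Sum>k\<in>UNIV. (h *\<^sub>R a)$k * G k (x0 + s *\<^sub>R a)) = (\<lambda>h. \<phi> s * h)"
      unfolding \<phi>_def by (auto simp: sum_distrib_left mult_ac intro!: ext sum.cong)
    ultimately show ?thesis by (simp add: has_field_derivative_def)
  qed
  show "L \<le> 0"
  proof (rule ccontr)
    assume "\<not> L \<le> 0"
    then have "L > 0" by simp
    from DERIV_pos_inc_right[OF dphi this] obtain d where d: "d > 0" "\<forall>h>0. h < d \<longrightarrow> \<phi> 0 < \<phi> (0 + h)" by blast
    have phi0: "\<phi> 0 = 0" unfolding \<phi>_def using G0 by simp
    define h where "h = min (d/2) (e / (2 * (norm a + 1)))"
    have na: "norm a + 1 > 0" by (smt (verit) norm_ge_zero)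
    have hpos: "h > 0" using d e na by (simp add: h_def)
    have "h \<le> e / (2 * (norm a + 1))" unfolding h_def by simp
    then have "h * (norm a + 1) \<le> e/2" using na by (simp add: field_simps)
    then have "h * norm a < e" using hpos e by (simp add: algebra_simps)
    then have inb: "x0 + h *\<^sub>R a \<in> ball x0 e" using hpos by (simp add: dist_norm)
    from MVT2[of 0 h g \<phi>] hpos dg obtain z where z: "0 < z" "z < h" "g h - g 0 = (h - 0) * \<phi> z" by blast
    have "\<phi> z > 0" using d z phi0 hpos unfolding h_def by auto
    then have "g h > g 0" using z hpos by (smt (verit) mult_pos_pos)
    moreover have "F (x0 + h *\<^sub>R a) \<le> F x0" using mx inb by blast
    ultimately show False unfolding g_def by simp
  qed
qed

lemma time_max:
  fixes h :: "real \<Rightarrow> real"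
  assumes "(h has_real_derivative l) (at t)" "0 < t" "\<forall>\<tau>. 0 < \<tau> \<and> \<tau> \<le> t \<longrightarrow> h \<tau> \<le> h t"
  shows "l \<ge> 0"
proof (rule ccontr)
  assume "\<not> l \<ge> 0"
  then have "l < 0" by simp
  from DERIV_neg_dec_left[OF assms(1) this] obtain d where d: "d > 0" "\<forall>k>0. k < d \<longrightarrow> h t < h (t - k)" by blast
  define k where "k = min (d/2) (t/2)"
  have "k > 0" "k < d" "k < t" using d assms(2) by (auto simp: k_def)
  then show False using d assms(3)[rule_format, of "t - k"] by force
qed

lemma Ck_const: "Ck_on k S (\<lambda>x. c)"
proof (induction k arbitrary: c)
  case 0 then show ?case by simp
next
  case (Suc k)
  have "(\<lambda>x. frechet_derivative (\<lambda>x. c) (at x) b) = (\<lambda>x. 0)" for b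
    using frechet_derivative_at[OF has_derivative_const[of c "at _"]] by (metis)
  then show ?case using Suc by simp
qed

lemma smooth_coord: "smooth_fun (\<lambda>x::real^'n::finite. x$i)"
  unfolding smooth_fun_def
proof
  fix k show "Ck_on k UNIV (\<lambda>x::real^'n. x$i)"
  proof (cases k)
    case 0 then show ?thesis by (simp add: continuous_on_component)
  next
    case (Suc k')
    have d: "((\<lambda>x::real^'n. x$i) has_derivative (\<lambda>v. v$i)) (at x)" for x
      by (rule bounded_linear_imp_has_derivative) (rule bounded_linear_vec_nth)
    have "(\<lambda>x. frechet_derivative (\<lambda>x::real^'n. x$i) (at x) b) = (\<lambda>x. b$i)" for b
      using frechet_derivative_at[OF d] by metis
    then show ?thesis using Suc d Ck_const by (auto simp: differentiable_def)
  qed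
qed

lemma smooth_diff: "smooth_fun f \<Longrightarrow> f differentiable (at x)"
  unfolding smooth_fun_def by (metis Ck_on.simps(2) UNIV_I)

lemma smooth_partial_cont:
  "smooth_fun f \<Longrightarrow> b \<in> Basis \<Longrightarrow> continuous_on UNIV (\<lambda>x. frechet_derivative f (at x) b)"
  unfolding smooth_fun_def by (metis Ck_on.simps(1) Ck_on.simps(2))

lemma smooth_cont: "smooth_fun f \<Longrightarrow> continuous_on UNIV f"
  unfolding smooth_fun_def by (metis Ck_on.simps(1))

lemma dil_nth[simp]: "dil \<sigma> r x $ i = r powr \<sigma> i * x $ i"
  by (simp add: dil_def)

lemma vf_act_scale:
  assumes "f differentiable (at x)"
  shows "vf_act X (\<lambda>y. c * f y) x = c * vf_act X f x"
proof -
  have "((\<lambda>y. c * f y) has_derivative (\<lambda>v. c * frechet_derivative f (at x) v)) (at x)"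
    using assms by (intro has_derivative_mult_right) (simp add: frechet_derivative_works)
  from frechet_derivative_at[OF this] show ?thesis unfolding vf_act_def by metis
qed

lemma scaling_X:
  fixes X :: "'n::finite vf"
  assumes H: "\<forall>r>0. \<forall>f. smooth_fun f \<longrightarrow> (\<forall>x. vf_act X (f \<circ> dil \<sigma> r) x = r * vf_act X f (dil \<sigma> r x))"
    and r: "r > 0"
  shows "X (dil \<sigma> r x) $ i = r powr (\<sigma> i - 1) * X x $ i"
proof -
  have e: "(\<lambda>x::real^'n. x$i) \<circ> dil \<sigma> r = (\<lambda>x. r powr \<sigma> i * x $ i)" by (auto simp: o_def)
  have d: "((\<lambda>x::real^'n. x$i) has_derivative (\<lambda>v. v$i)) (at x)" for x
    by (rule bounded_linear_imp_has_derivative) (rule bounded_linear_vec_nth)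
  have v: "vf_act X (\<lambda>x. x$i) y = X y $ i" for y
    unfolding vf_act_def using frechet_derivative_at[OF d] by metis
  have "vf_act X (\<lambda>x. r powr \<sigma> i * x $ i) x = r powr \<sigma> i * X x $ i"
    using vf_act_scale[of "\<lambda>x. x$i" x X "r powr \<sigma> i"] d v by (auto simp: differentiable_def)
  moreover have "vf_act X ((\<lambda>x::real^'n. x$i) \<circ> dil \<sigma> r) x = r * vf_act X (\<lambda>x. x$i) (dil \<sigma> r x)"
    using H r smooth_coord by blast
  ultimately have "r powr \<sigma> i * X x $ i = r * X (dil \<sigma> r x) $ i" using e v by simp
  then show ?thesis using r by (simp add: powr_diff field_simps)
qed

lemma scaling_Y:
  fixes X :: "'n::finite vf"
  assumes H: "\<forall>r>0. \<forall>f. smooth_fun f \<longrightarrow> (\<forall>x. vf_act X (f \<circ> dil \<sigma> r) x = r * vf_act X f (dil \<sigma> r x))"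
    and r: "r > 0" and sm: "smooth_fun (\<lambda>y. X y $ i)"
  shows "vf_act X (\<lambda>y. X y $ i) (dil \<sigma> r x) = r powr (\<sigma> i - 2) * vf_act X (\<lambda>y. X y $ i) x"
proof -
  have e: "(\<lambda>y. X y $ i) \<circ> dil \<sigma> r = (\<lambda>y. r powr (\<sigma> i - 1) * X y $ i)"
    using scaling_X[OF H r] by (auto simp: o_def)
  have "vf_act X ((\<lambda>y. X y $ i) \<circ> dil \<sigma> r) x = r * vf_act X (\<lambda>y. X y $ i) (dil \<sigma> r x)"
    using H r sm by blast
  moreover have "vf_act X ((\<lambda>y. X y $ i) \<circ> dil \<sigma> r) x = r powr (\<sigma> i - 1) * vf_act X (\<lambda>y. X y $ i) x"
    unfolding e by (rule vf_act_scale[OF smooth_diff[OF sm]])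
  ultimately have "r * vf_act X (\<lambda>y. X y $ i) (dil \<sigma> r x) = r powr (\<sigma> i - 1) * vf_act X (\<lambda>y. X y $ i) x" by simp
  then show ?thesis using r by (simp add: powr_diff field_simps power2_eq_square)
qed

lemma cont_Y:
  fixes X :: "'n::finite vf"
  assumes sm: "\<forall>i. smooth_fun (\<lambda>y. X y $ i)"
  shows "continuous_on UNIV (\<lambda>x. vf_act X (\<lambda>y. X y $ i) x)"
proof -
  have "vf_act X (\<lambda>y. X y $ i) x = (\<Sum>k\<in>UNIV. X x $ k * frechet_derivative (\<lambda>y. X y $ i) (at x) (axis k 1))" for x
  proof -
    have "linear (frechet_derivative (\<lambda>y. X y $ i) (at x))"
      using smooth_diff[OF sm[rule_format, of i]] frechet_derivative_works has_derivative_linear by blast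
    then show ?thesis unfolding vf_act_def by (rule lin_expand)
  qed
  moreover have "continuous_on UNIV (\<lambda>x. \<Sum>k\<in>UNIV. X x $ k * frechet_derivative (\<lambda>y. X y $ i) (at x) (axis k 1))"
  proof -
    have c1: "continuous_on UNIV (\<lambda>x. X x $ k)" for k using sm smooth_cont by blast
    have c2: "continuous_on UNIV (\<lambda>x. frechet_derivative (\<lambda>y. X y $ i) (at x) (axis k 1))" for k
      using sm by (intro smooth_partial_cont) (auto simp: axis_in_Basis_iff)
    show ?thesis by (intro continuous_intros c1 c2)
  qed
  ultimately show ?thesis by simp
qed

definition pp :: "('n::finite \<Rightarrow> real) \<Rightarrow> real" where "pp \<sigma> = (\<Sum>i\<in>UNIV. \<sigma> i)"
definition ee :: "('n::finite \<Rightarrow> real) \<Rightarrow> 'n \<Rightarrow> real" where "ee \<sigma> i = pp \<sigma> / \<sigma> i"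
definition phi :: "('n::finite \<Rightarrow> real) \<Rightarrow> 'n \<Rightarrow> real \<Rightarrow> real" where
  "phi \<sigma> i s = (1 + s\<^sup>2) powr ee \<sigma> i"
definition phi1 :: "('n::finite \<Rightarrow> real) \<Rightarrow> 'n \<Rightarrow> real \<Rightarrow> real" where
  "phi1 \<sigma> i s = ee \<sigma> i * (1 + s\<^sup>2) powr (ee \<sigma> i - 1) * (2 * s)"
definition phi2 :: "('n::finite \<Rightarrow> real) \<Rightarrow> 'n \<Rightarrow> real \<Rightarrow> real" where
  "phi2 \<sigma> i s = ee \<sigma> i * ((ee \<sigma> i - 1) * (1 + s\<^sup>2) powr (ee \<sigma> i - 2) * (2 * s) * (2 * s)
                  + (1 + s\<^sup>2) powr (ee \<sigma> i - 1) * 2)"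
definition psi :: "('n::finite \<Rightarrow> real) \<Rightarrow> real^'n \<Rightarrow> real" where
  "psi \<sigma> y = (\<Sum>i\<in>UNIV. phi \<sigma> i (y$i))"
definition rr :: "('n::finite \<Rightarrow> real) \<Rightarrow> real^'n \<Rightarrow> real" where
  "rr \<sigma> y = (\<Sum>i\<in>UNIV. (1 + (y$i)\<^sup>2) powr (1 / (2 * \<sigma> i)))"

lemma powr_gen_deriv:
  "((\<lambda>s::real. (1 + s\<^sup>2) powr a) has_real_derivative a * (1 + s\<^sup>2) powr (a - 1) * (2 * s)) (at s)"
proof -
  have p: "1 + s\<^sup>2 > 0" by (smt (verit) zero_le_power2)
  show ?thesis
    using p by (auto intro!: derivative_eq_intros simp: powr_diff field_simps)
qed

lemma phi_deriv: "(phi \<sigma> i has_real_derivative phi1 \<sigma> i s) (at s)"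
  unfolding phi_def[abs_def] phi1_def by (rule powr_gen_deriv)

lemma phi1_deriv: "(phi1 \<sigma> i has_real_derivative phi2 \<sigma> i s) (at s)"
proof -
  have "((\<lambda>s. ee \<sigma> i * ((1 + s\<^sup>2) powr (ee \<sigma> i - 1) * (2 * s))) has_real_derivative
     ee \<sigma> i * ((ee \<sigma> i - 1) * (1 + s\<^sup>2) powr (ee \<sigma> i - 1 - 1) * (2 * s) * (2 * s) + (1 + s\<^sup>2) powr (ee \<sigma> i - 1) * 2)) (at s)"
    using add_pos_nonneg[OF zero_less_one zero_le_power2[of s]]
    by (auto intro!: derivative_eq_intros powr_gen_deriv)
  then show ?thesis unfolding phi1_def[abs_def] phi2_def by (simp add: mult_ac)
qed

lemma b_pos: "(1::real) \<le> 1 + s\<^sup>2" by simp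

lemma rr_term_le: "(1 + (y$i)\<^sup>2) powr (1 / (2 * \<sigma> i)) \<le> rr \<sigma> y"
  unfolding rr_def by (rule member_le_sum) auto

lemma rr_ge1:
  assumes "\<forall>i. 1 \<le> \<sigma> i"
  shows "1 \<le> rr \<sigma> y"
proof -
  obtain i :: 'a where True by blast
  have "1 \<le> (1 + (y$i)\<^sup>2) powr (1 / (2 * \<sigma> i))"
    using assms[rule_format, of i] by (intro ge_one_powr_ge_zero) (auto simp: b_pos)
  then show ?thesis using rr_term_le[of y i \<sigma>] by linarith
qed

lemma abs_le_rr:
  assumes "\<forall>i. 1 \<le> \<sigma> i"
  shows "\<bar>y$i\<bar> \<le> rr \<sigma> y powr \<sigma> i"
proof -
  let ?b = "1 + (y$i)\<^sup>2"
  have s: "\<sigma> i > 0" using assms by (smt (verit))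
  have "\<bar>y$i\<bar> \<le> sqrt ?b" by (rule real_le_rsqrt) simp
  also have "\<dots> = (?b powr (1 / (2 * \<sigma> i))) powr \<sigma> i"
    using s by (simp add: powr_powr powr_half_sqrt[symmetric])
  also have "\<dots> \<le> rr \<sigma> y powr \<sigma> i"
    using s rr_term_le by (intro powr_mono2) auto
  finally show ?thesis .
qed

lemma growth:
  fixes f :: "real^'n::finite \<Rightarrow> real"
  assumes sg: "\<forall>i. 1 \<le> \<sigma> i" and c: "continuous_on UNIV f"
    and scal: "\<forall>r>0. \<forall>x. f (dil \<sigma> r x) = r powr d * f x"
  shows "\<exists>A\<ge>0. \<forall>y. \<bar>f y\<bar> \<le> A * rr \<sigma> y powr d"
proof -
  let ?Q = "cbox (-1) (1::real^'n)"
  have "compact (f ` ?Q)" by (intro compact_continuous_image continuous_on_subset[OF c]) auto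
  then obtain A where A: "\<forall>z\<in>f ` ?Q. norm z \<le> A" using compact_imp_bounded bounded_iff by metis
  have A0: "A \<ge> 0" using A[rule_format, of "f 0"] by (auto simp: mem_box_cart)
  show ?thesis
  proof (intro exI[of _ A] conjI allI A0)
    fix y
    define r where "r = rr \<sigma> y"
    have r1: "r \<ge> 1" unfolding r_def using rr_ge1[OF sg] .
    define x where "x = dil \<sigma> (1/r) y"
    have yx: "y = dil \<sigma> r x"
      unfolding x_def using r1 by (simp add: vec_eq_iff powr_mult[symmetric])
    have "x \<in> ?Q"
    proof -
      have "\<bar>x$i\<bar> \<le> 1" for i
      proof -
        have "\<bar>x$i\<bar> = \<bar>y$i\<bar> / r powr \<sigma> i" using r1 by (simp add: x_def powr_divide abs_mult)
        also have "\<dots> \<le> 1" using abs_le_rr[OF sg, of y i] r1 by (simp add: r_def)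
        finally show ?thesis .
      qed
      then show ?thesis by (auto simp: mem_box_cart abs_le_iff)
    qed
    then have "\<bar>f x\<bar> \<le> A" using A by auto
    moreover have "f y = r powr d * f x" using scal r1 yx by simp
    ultimately show "\<bar>f y\<bar> \<le> A * rr \<sigma> y powr d"
      by (simp add: abs_mult r_def mult.commute mult_right_mono)
  qed
qed

context
  fixes \<sigma> :: "'n::finite \<Rightarrow> real"
  assumes sg: "\<forall>i. 1 \<le> \<sigma> i"
begin

lemma sg_pos: "\<sigma> i > 0" using sg by (smt (verit))

lemma pp_ge: "\<sigma> i \<le> pp \<sigma>"
  unfolding pp_def by (rule member_le_sum) (use sg_pos in \<open>auto intro: less_imp_le\<close>)

lemma ee_ge1: "1 \<le> ee \<sigma> i"
  unfolding ee_def using pp_ge[of i] sg_pos[of i] by simp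

lemma ee_mult: "\<sigma> i * ee \<sigma> i = pp \<sigma>"
  unfolding ee_def using sg_pos[of i] by simp

lemma bpow_le:
  assumes "0 \<le> \<alpha>"
  shows "(1 + (y$i)\<^sup>2) powr \<alpha> \<le> rr \<sigma> y powr (2 * \<sigma> i * \<alpha>)"
proof -
  have "(1 + (y$i)\<^sup>2) powr \<alpha> = ((1 + (y$i)\<^sup>2) powr (1 / (2 * \<sigma> i))) powr (2 * \<sigma> i * \<alpha>)"
    using sg_pos[of i] by (simp add: powr_powr)
  also have "\<dots> \<le> rr \<sigma> y powr (2 * \<sigma> i * \<alpha>)"
    using sg_pos[of i] assms rr_term_le by (intro powr_mono2) auto
  finally show ?thesis .
qed

lemma phi1_bound: "\<bar>phi1 \<sigma> i s\<bar> \<le> 2 * ee \<sigma> i * (1 + s\<^sup>2) powr (ee \<sigma> i - 1/2)"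
proof -
  let ?b = "1 + s\<^sup>2" and ?e = "ee \<sigma> i"
  have b: "?b > 0" by (smt (verit) zero_le_power2)
  have "\<bar>s\<bar> \<le> ?b powr (1/2)" using b by (simp add: powr_half_sqrt) (rule real_le_rsqrt, simp)
  have "\<bar>phi1 \<sigma> i s\<bar> = 2 * ?e * (?b powr (?e - 1) * \<bar>s\<bar>)"
    using ee_ge1[of i] by (simp add: phi1_def abs_mult)
  also have "\<dots> \<le> 2 * ?e * (?b powr (?e - 1) * ?b powr (1/2))"
    using ee_ge1[of i] \<open>\<bar>s\<bar> \<le> _\<close> by (intro mult_left_mono) auto
  also have "?b powr (?e - 1) * ?b powr (1/2) = ?b powr (?e - 1/2)"
    by (simp add: powr_add[symmetric])
  finally show ?thesis .
qed

lemma phi2_bound: "\<bar>phi2 \<sigma> i s\<bar> \<le> ee \<sigma> i * (4 * \<bar>ee \<sigma> i - 1\<bar> + 2) * (1 + s\<^sup>2) powr (ee \<sigma> i - 1)"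
proof -
  let ?b = "1 + s\<^sup>2" and ?e = "ee \<sigma> i"
  have b: "?b > 0" by (smt (verit) zero_le_power2)
  have e2: "?b powr (?e - 2) * ?b = ?b powr (?e - 1)"
    using b powr_add[of ?b "?e - 2" 1] by simp
  have "\<bar>(?e - 1) * ?b powr (?e - 2) * (2 * s) * (2 * s)\<bar> = 4 * \<bar>?e - 1\<bar> * (?b powr (?e - 2) * s\<^sup>2)"
    by (simp add: abs_mult power2_eq_square)
  also have "\<dots> \<le> 4 * \<bar>?e - 1\<bar> * (?b powr (?e - 2) * ?b)"
    by (intro mult_left_mono) auto
  finally have t1: "\<bar>(?e - 1) * ?b powr (?e - 2) * (2 * s) * (2 * s)\<bar> \<le> 4 * \<bar>?e - 1\<bar> * ?b powr (?e - 1)"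
    using e2 by simp
  have "\<bar>phi2 \<sigma> i s\<bar> \<le> ?e * (\<bar>(?e - 1) * ?b powr (?e - 2) * (2 * s) * (2 * s)\<bar> + ?b powr (?e - 1) * 2)"
  proof -
    have "\<bar>phi2 \<sigma> i s\<bar> = ?e * \<bar>(?e - 1) * ?b powr (?e - 2) * (2 * s) * (2 * s) + ?b powr (?e - 1) * 2\<bar>"
      using ee_ge1[of i] unfolding phi2_def by (simp add: abs_mult)
    also have "\<dots> \<le> ?e * (\<bar>(?e - 1) * ?b powr (?e - 2) * (2 * s) * (2 * s)\<bar> + ?b powr (?e - 1) * 2)"
      using ee_ge1[of i] by (intro mult_left_mono) (auto intro: order.trans[OF abs_triangle_ineq])
    finally show ?thesis .
  qed
  also have "\<dots> \<le> ?e * (4 * \<bar>?e - 1\<bar> * ?b powr (?e - 1) + ?b powr (?e - 1) * 2)"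
    using ee_ge1[of i] t1 by (intro mult_left_mono) auto
  finally show ?thesis by (simp add: algebra_simps)
qed

lemma rr_pos: "rr \<sigma> y > 0" using rr_ge1[OF sg, of y] by simp

lemma term1:
  assumes A: "\<bar>Y\<bar> \<le> A * rr \<sigma> y powr (\<sigma> i - 2)"
  shows "\<bar>Y * phi1 \<sigma> i (y$i)\<bar> \<le> 2 * ee \<sigma> i * A * rr \<sigma> y powr (2 * pp \<sigma>)"
proof -
  let ?R = "rr \<sigma> y" and ?e = "ee \<sigma> i"
  have A0: "A \<ge> 0" using A rr_pos by (smt (verit) powr_gt_zero zero_le_mult_iff)
  have "\<bar>phi1 \<sigma> i (y$i)\<bar> \<le> 2 * ?e * ?R powr (2 * \<sigma> i * (?e - 1/2))"
  proof -
    have "(1 + (y$i)\<^sup>2) powr (?e - 1/2) \<le> ?R powr (2 * \<sigma> i * (?e - 1/2))"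
      using ee_ge1[of i] by (intro bpow_le) auto
    then have "2 * ?e * (1 + (y$i)\<^sup>2) powr (?e - 1/2) \<le> 2 * ?e * ?R powr (2 * \<sigma> i * (?e - 1/2))"
      using ee_ge1[of i] by (intro mult_left_mono) auto
    then show ?thesis using phi1_bound[of i "y$i"] by linarith
  qed
  also have "2 * \<sigma> i * (?e - 1/2) = 2 * pp \<sigma> - \<sigma> i" using ee_mult[of i] by (simp add: algebra_simps)
  finally have p: "\<bar>phi1 \<sigma> i (y$i)\<bar> \<le> 2 * ?e * ?R powr (2 * pp \<sigma> - \<sigma> i)" .
  have "\<bar>Y * phi1 \<sigma> i (y$i)\<bar> \<le> (A * ?R powr (\<sigma> i - 2)) * (2 * ?e * ?R powr (2 * pp \<sigma> - \<sigma> i))"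
    unfolding abs_mult using A p by (intro mult_mono) auto
  also have "\<dots> = 2 * ?e * A * (?R powr (\<sigma> i - 2) * ?R powr (2 * pp \<sigma> - \<sigma> i))" by simp
  also have "?R powr (\<sigma> i - 2) * ?R powr (2 * pp \<sigma> - \<sigma> i) = ?R powr (2 * pp \<sigma> - 2)"
    by (simp add: powr_add[symmetric])
  also have "?R powr (2 * pp \<sigma> - 2) \<le> ?R powr (2 * pp \<sigma>)"
    using rr_ge1[OF sg, of y] by (intro powr_mono) auto
  finally show ?thesis using A0 ee_ge1[of i] by (simp add: mult_left_mono)
qed

lemma term2:
  assumes A: "\<bar>X\<bar> \<le> A * rr \<sigma> y powr (\<sigma> i - 1)"
  shows "\<bar>X * (phi2 \<sigma> i (y$i) * X)\<bar> \<le> A\<^sup>2 * (ee \<sigma> i * (4 * \<bar>ee \<sigma> i - 1\<bar> + 2)) * rr \<sigma> y powr (2 * pp \<sigma>)"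
proof -
  let ?R = "rr \<sigma> y" and ?e = "ee \<sigma> i"
  let ?c = "?e * (4 * \<bar>?e - 1\<bar> + 2)"
  have c0: "?c \<ge> 0" using ee_ge1[of i] by simp
  have A0: "A \<ge> 0" using A rr_pos by (smt (verit) powr_gt_zero zero_le_mult_iff)
  have "\<bar>phi2 \<sigma> i (y$i)\<bar> \<le> ?c * ?R powr (2 * \<sigma> i * (?e - 1))"
  proof -
    have "(1 + (y$i)\<^sup>2) powr (?e - 1) \<le> ?R powr (2 * \<sigma> i * (?e - 1))"
      using ee_ge1[of i] by (intro bpow_le) auto
    then have "?c * (1 + (y$i)\<^sup>2) powr (?e - 1) \<le> ?c * ?R powr (2 * \<sigma> i * (?e - 1))"
      using c0 by (intro mult_left_mono) auto
    then show ?thesis using phi2_bound[of i "y$i"] by linarith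
  qed
  also have "2 * \<sigma> i * (?e - 1) = 2 * pp \<sigma> - 2 * \<sigma> i" using ee_mult[of i] by (simp add: algebra_simps)
  finally have p: "\<bar>phi2 \<sigma> i (y$i)\<bar> \<le> ?c * ?R powr (2 * pp \<sigma> - 2 * \<sigma> i)" .
  have XX: "\<bar>X\<bar> * \<bar>X\<bar> \<le> (A * ?R powr (\<sigma> i - 1)) * (A * ?R powr (\<sigma> i - 1))"
    using A by (intro mult_mono) auto
  have "\<bar>X * (phi2 \<sigma> i (y$i) * X)\<bar> = \<bar>phi2 \<sigma> i (y$i)\<bar> * (\<bar>X\<bar> * \<bar>X\<bar>)" by (simp add: abs_mult)
  also have "\<dots> \<le> (?c * ?R powr (2 * pp \<sigma> - 2 * \<sigma> i)) * ((A * ?R powr (\<sigma> i - 1)) * (A * ?R powr (\<sigma> i - 1)))"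
    using p XX A0 A by (intro mult_mono) auto
  also have "\<dots> = A\<^sup>2 * ?c * (?R powr (2 * pp \<sigma> - 2 * \<sigma> i) * ?R powr (\<sigma> i - 1) * ?R powr (\<sigma> i - 1))"
    by (simp add: power2_eq_square mult_ac)
  also have "?R powr (2 * pp \<sigma> - 2 * \<sigma> i) * ?R powr (\<sigma> i - 1) * ?R powr (\<sigma> i - 1) = ?R powr (2 * pp \<sigma> - 2)"
    by (simp add: powr_add[symmetric])
  also have "?R powr (2 * pp \<sigma> - 2) \<le> ?R powr (2 * pp \<sigma>)"
    using rr_ge1[OF sg, of y] by (intro powr_mono) auto
  finally show ?thesis using A0 c0 by (simp add: mult_left_mono)
qed

lemma phi_ge: "1 + s\<^sup>2 \<le> phi \<sigma> i s"
proof -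
  have "(1 + s\<^sup>2) powr 1 \<le> (1 + s\<^sup>2) powr ee \<sigma> i"
    using ee_ge1[of i] by (intro powr_mono) auto
  then show ?thesis by (simp add: phi_def)
qed

lemma phi_nonneg: "0 \<le> phi \<sigma> i s" by (simp add: phi_def)

lemma psi_ge_phi: "phi \<sigma> i (y$i) \<le> psi \<sigma> y"
  unfolding psi_def by (rule member_le_sum) (auto simp: phi_nonneg)

lemma psi_ge1: "1 \<le> psi \<sigma> y"
  using psi_ge_phi[of undefined y] phi_ge[where i=undefined and s="y$undefined"] zero_le_power2[of "y$undefined"] by linarith

lemma psi_ge_norm: "norm y \<le> psi \<sigma> y"
proof -
  have "norm y \<le> (\<Sum>i\<in>UNIV. \<bar>y$i\<bar>)" by (rule norm_le_l1_cart)
  also have "\<dots> \<le> (\<Sum>i\<in>UNIV. phi \<sigma> i (y$i))"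
  proof (rule sum_mono)
    fix i
    have "\<bar>y$i\<bar> \<le> 1 + (y$i)\<^sup>2" 
    proof -
      have "0 \<le> (\<bar>y$i\<bar> - 1)\<^sup>2" by simp
      then have "0 \<le> \<bar>y$i\<bar>\<^sup>2 - 2 * \<bar>y$i\<bar> + 1" by (simp add: power2_diff)
      then show ?thesis by simp
    qed
    then show "\<bar>y$i\<bar> \<le> phi \<sigma> i (y$i)" using phi_ge[where i=i and s="y$i"] by linarith
  qed
  finally show ?thesis by (simp add: psi_def)
qed

lemma rr_le_psi: "rr \<sigma> y powr (2 * pp \<sigma>) \<le> real CARD('n) powr (2 * pp \<sigma>) * psi \<sigma> y"
proof -
  define q where "q i = (1 + (y$i)\<^sup>2) powr (1 / (2 * \<sigma> i))" for i
  have "Max (range q) \<in> range q" by (intro Max_in) auto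
  then obtain i0 where i0: "q i0 = Max (range q)" by (metis rangeE)
  have qm: "q i \<le> q i0" for i unfolding i0 by (intro Max_ge) auto
  have pp0: "pp \<sigma> \<ge> 0" using pp_ge[of undefined] sg_pos[of undefined] by simp
  have "rr \<sigma> y = (\<Sum>i\<in>UNIV. q i)" by (simp add: rr_def q_def)
  also have "\<dots> \<le> (\<Sum>i\<in>(UNIV::'n set). q i0)" by (intro sum_mono qm)
  also have "\<dots> = real CARD('n) * q i0" by simp
  finally have "rr \<sigma> y powr (2 * pp \<sigma>) \<le> (real CARD('n) * q i0) powr (2 * pp \<sigma>)"
    using pp0 rr_pos by (intro powr_mono2) (auto intro: less_imp_le)
  also have "\<dots> = real CARD('n) powr (2 * pp \<sigma>) * q i0 powr (2 * pp \<sigma>)" by (simp add: powr_mult q_def)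
  also have "q i0 powr (2 * pp \<sigma>) = phi \<sigma> i0 (y$i0)"
    using sg_pos[of i0] by (simp add: q_def phi_def powr_powr ee_def)
  also have "real CARD('n) powr (2 * pp \<sigma>) * phi \<sigma> i0 (y$i0) \<le> real CARD('n) powr (2 * pp \<sigma>) * psi \<sigma> y"
    by (intro mult_left_mono psi_ge_phi) auto
  finally show ?thesis .
qed

end

lemma barrier:
  fixes \<sigma> :: "'n::finite \<Rightarrow> real" and Xc Yc :: "nat \<Rightarrow> 'n \<Rightarrow> real^'n \<Rightarrow> real"
  assumes sg: "\<forall>i. 1 \<le> \<sigma> i"
    and bd: "\<forall>j<m. \<forall>i. \<exists>A. \<forall>y. \<bar>Xc j i y\<bar> \<le> A * rr \<sigma> y powr (\<sigma> i - 1) \<and> \<bar>Yc j i y\<bar> \<le> A * rr \<sigma> y powr (\<sigma> i - 2)"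
  shows "\<exists>K. \<forall>y. (\<Sum>j<m. \<Sum>i\<in>UNIV. Yc j i y * phi1 \<sigma> i (y$i) + Xc j i y * (phi2 \<sigma> i (y$i) * Xc j i y)) \<le> K * psi \<sigma> y"
proof -
  from bd obtain A where A: "\<forall>j<m. \<forall>i. \<forall>y. \<bar>Xc j i y\<bar> \<le> A j i * rr \<sigma> y powr (\<sigma> i - 1) \<and> \<bar>Yc j i y\<bar> \<le> A j i * rr \<sigma> y powr (\<sigma> i - 2)"
    by metis
  define c where "c j i = 2 * ee \<sigma> i * A j i + (A j i)\<^sup>2 * (ee \<sigma> i * (4 * \<bar>ee \<sigma> i - 1\<bar> + 2))" for j i
  define C where "C = (\<Sum>j<m. \<Sum>i\<in>UNIV. c j i)"
  define K where "K = max C 0 * real CARD('n) powr (2 * pp \<sigma>)"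
  show ?thesis
  proof (intro exI[of _ K] allI)
    fix y
    let ?P = "rr \<sigma> y powr (2 * pp \<sigma>)"
    have "(\<Sum>j<m. \<Sum>i\<in>UNIV. Yc j i y * phi1 \<sigma> i (y$i) + Xc j i y * (phi2 \<sigma> i (y$i) * Xc j i y))
          \<le> (\<Sum>j<m. \<Sum>i\<in>UNIV. c j i * ?P)"
    proof (intro sum_mono)
      fix j i assume j: "j \<in> {..<m}"
      have t1: "\<bar>Yc j i y * phi1 \<sigma> i (y$i)\<bar> \<le> 2 * ee \<sigma> i * A j i * ?P"
        using A j by (intro term1[OF sg]) auto
      have t2: "\<bar>Xc j i y * (phi2 \<sigma> i (y$i) * Xc j i y)\<bar> \<le> (A j i)\<^sup>2 * (ee \<sigma> i * (4 * \<bar>ee \<sigma> i - 1\<bar> + 2)) * ?P"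
        using A j by (intro term2[OF sg]) auto
      show "Yc j i y * phi1 \<sigma> i (y$i) + Xc j i y * (phi2 \<sigma> i (y$i) * Xc j i y) \<le> c j i * ?P"
        using t1 t2 unfolding c_def by (simp add: algebra_simps)
    qed
    also have "\<dots> = C * ?P" unfolding C_def by (simp add: sum_distrib_right)
    also have "\<dots> \<le> max C 0 * ?P" by (intro mult_right_mono) auto
    also have "\<dots> \<le> max C 0 * (real CARD('n) powr (2 * pp \<sigma>) * psi \<sigma> y)"
      by (intro mult_left_mono rr_le_psi[OF sg]) auto
    finally show "(\<Sum>j<m. \<Sum>i\<in>UNIV. Yc j i y * phi1 \<sigma> i (y$i) + Xc j i y * (phi2 \<sigma> i (y$i) * Xc j i y)) \<le> K * psi \<sigma> y"
      by (simp add: K_def mult_ac)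
  qed
qed

lemma coord_deriv:
  fixes f :: "real \<Rightarrow> real"
  assumes "(f has_real_derivative f') (at (y$i))"
  shows "((\<lambda>y::real^'n::finite. f (y$i)) has_derivative (\<lambda>v. f' * v$i)) (at y)"
proof -
  have l: "((\<lambda>y::real^'n. y$i) has_derivative (\<lambda>v. v$i)) (at y)"
    by (rule bounded_linear_imp_has_derivative) (rule bounded_linear_vec_nth)
  from has_derivative_compose[OF l assms[unfolded has_field_derivative_def]]
  show ?thesis by (simp add: o_def)
qed

lemma psi_deriv:
  "(psi \<sigma> has_derivative (\<lambda>v. \<Sum>k\<in>UNIV. v$k * phi1 \<sigma> k (y$k))) (at y)"
proof -
  have "((\<lambda>y. \<Sum>k\<in>UNIV. phi \<sigma> k (y$k)) has_derivative (\<lambda>v. \<Sum>k\<in>UNIV. phi1 \<sigma> k (y$k) * v$k)) (at y)"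
    by (intro has_derivative_sum coord_deriv phi_deriv)
  then show ?thesis unfolding psi_def[abs_def] by (simp add: mult.commute)
qed

lemma phi1_coord_deriv:
  "((\<lambda>y::real^'n::finite. phi1 \<sigma> k (y$k)) has_derivative (\<lambda>v. phi2 \<sigma> k (x$k) * v$k)) (at x)"
  by (intro coord_deriv phi1_deriv)

lemma vf2_psi:
  fixes X :: "'n::finite vf"
  assumes sm: "\<forall>i. smooth_fun (\<lambda>y. X y $ i)"
  shows "vf_act X (vf_act X (psi \<sigma>)) x =
     (\<Sum>i\<in>UNIV. vf_act X (\<lambda>y. X y $ i) x * phi1 \<sigma> i (x$i) + X x $ i * (phi2 \<sigma> i (x$i) * X x $ i))"
proof -
  have dX: "((\<lambda>y. X y $ k) has_derivative frechet_derivative (\<lambda>y. X y $ k) (at x)) (at x)" for k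
    using smooth_diff[OF sm[rule_format, of k]] frechet_derivative_works by blast
  show ?thesis
    by (subst vf2_formula[OF psi_deriv phi1_coord_deriv dX]) (simp add: vf_act_def)
qed

lemma basis_0_axis: "((0::real), axis k (1::real)) \<in> (Basis :: (real \<times> (real^'n::finite)) set)"
  by (auto simp: Basis_prod_def axis_in_Basis_iff)

lemma barrier_K:
  fixes \<sigma> :: "'n::finite \<Rightarrow> real" and X :: "nat \<Rightarrow> 'n vf"
  assumes smooth: "\<forall>j<m. smooth_vf (X j)"
    and sg: "\<forall>i. 1 \<le> \<sigma> i"
    and H1: "\<forall>r>0. \<forall>f. smooth_fun f \<longrightarrow> (\<forall>j<m. \<forall>x.
               vf_act (X j) (f \<circ> dil \<sigma> r) x = r * vf_act (X j) f (dil \<sigma> r x))"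
  shows "\<exists>K. \<forall>y. (\<Sum>j<m. vf_act (X j) (vf_act (X j) (psi \<sigma>)) y) \<le> K * psi \<sigma> y"
proof -
  have bd: "\<forall>j<m. \<forall>i. \<exists>A. \<forall>y. \<bar>X j y $ i\<bar> \<le> A * rr \<sigma> y powr (\<sigma> i - 1) \<and>
      \<bar>vf_act (X j) (\<lambda>y. X j y $ i) y\<bar> \<le> A * rr \<sigma> y powr (\<sigma> i - 2)"
  proof (intro allI impI)
    fix j i assume j: "j < m"
    have sm: "\<forall>i. smooth_fun (\<lambda>y. X j y $ i)" using smooth j by (simp add: smooth_vf_def)
    have Hj: "\<forall>r>0. \<forall>f. smooth_fun f \<longrightarrow> (\<forall>x. vf_act (X j) (f \<circ> dil \<sigma> r) x = r * vf_act (X j) f (dil \<sigma> r x))"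
      using H1 j by blast
    obtain A1 where A1: "\<forall>y. \<bar>X j y $ i\<bar> \<le> A1 * rr \<sigma> y powr (\<sigma> i - 1)"
      using growth[OF sg smooth_cont[OF sm[rule_format, of i]], where d="\<sigma> i - 1"] scaling_X[OF Hj] by blast
    obtain A2 where A2: "\<forall>y. \<bar>vf_act (X j) (\<lambda>y. X j y $ i) y\<bar> \<le> A2 * rr \<sigma> y powr (\<sigma> i - 2)"
      using growth[OF sg cont_Y[OF sm, of i], where d="\<sigma> i - 2"] scaling_Y[OF Hj _ sm[rule_format, of i]] by blast
    show "\<exists>A. \<forall>y. \<bar>X j y $ i\<bar> \<le> A * rr \<sigma> y powr (\<sigma> i - 1) \<and>
      \<bar>vf_act (X j) (\<lambda>y. X j y $ i) y\<bar> \<le> A * rr \<sigma> y powr (\<sigma> i - 2)"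
    proof (intro exI[of _ "max A1 A2"] allI conjI)
      fix y
      have p1: "rr \<sigma> y powr (\<sigma> i - 1) \<ge> 0" "rr \<sigma> y powr (\<sigma> i - 2) \<ge> 0" by auto
      show "\<bar>X j y $ i\<bar> \<le> max A1 A2 * rr \<sigma> y powr (\<sigma> i - 1)"
        using A1[rule_format, of y] mult_right_mono[OF max.cobounded1[of A1 A2] p1(1)] by linarith
      show "\<bar>vf_act (X j) (\<lambda>y. X j y $ i) y\<bar> \<le> max A1 A2 * rr \<sigma> y powr (\<sigma> i - 2)"
        using A2[rule_format, of y] mult_right_mono[OF max.cobounded2[of A2 A1] p1(2)] by (simp add: max.commute)
    qed
  qed
  from barrier[OF sg bd] obtain K where K:
    "\<forall>y. (\<Sum>j<m. \<Sum>i\<in>UNIV. vf_act (X j) (\<lambda>y. X j y $ i) y * phi1 \<sigma> i (y$i) + X j y $ i * (phi2 \<sigma> i (y$i) * X j y $ i)) \<le> K * psi \<sigma> y"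
    by blast
  have "(\<Sum>j<m. vf_act (X j) (vf_act (X j) (psi \<sigma>)) y) =
     (\<Sum>j<m. \<Sum>i\<in>UNIV. vf_act (X j) (\<lambda>y. X j y $ i) y * phi1 \<sigma> i (y$i) + X j y $ i * (phi2 \<sigma> i (y$i) * X j y $ i))" for y
    using smooth by (intro sum.cong refl vf2_psi) (auto simp: smooth_vf_def)
  then show ?thesis using K by metis
qed

lemma psi_cont: "continuous_on UNIV (psi \<sigma>)"
  by (intro continuous_at_imp_continuous_on ballI has_derivative_continuous[OF psi_deriv])

lemma core:
  fixes \<sigma> :: "'n::finite \<Rightarrow> real" and X :: "nat \<Rightarrow> 'n vf" and m :: nat
    and u :: "real \<times> ((real, 'n) vec) \<Rightarrow> real" and s :: real
  assumes smooth: "\<forall>j<m. smooth_vf (X j)"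
    and sg: "\<forall>i. 1 \<le> \<sigma> i"
    and H1: "\<forall>r>0. \<forall>f. smooth_fun f \<longrightarrow> (\<forall>j<m. \<forall>x.
               vf_act (X j) (f \<circ> dil \<sigma> r) x = r * vf_act (X j) f (dil \<sigma> r x))"
    and C2: "Ck_on 2 ({0<..} \<times> UNIV) u"
    and sol: "\<forall>p\<in>{0<..} \<times> UNIV. heat_op X m u p = 0"
    and cont: "continuous_on ({0..} \<times> UNIV) u"
    and init: "\<forall>x. u (0, x) = 0"
    and bdd: "\<exists>M. \<forall>p\<in>{0<..} \<times> UNIV. \<bar>u p\<bar> \<le> M"
    and t1: "t1 \<ge> 0"
  shows "s * u (t1, x1) \<le> 0"
proof -
  obtain K where K: "\<forall>y. (\<Sum>j<m. vf_act (X j) (vf_act (X j) (psi \<sigma>)) y) \<le> K * psi \<sigma> y"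
    using barrier_K[OF smooth sg H1] by blast
  obtain M where M: "\<forall>p\<in>{0<..} \<times> UNIV. \<bar>u p\<bar> \<le> M" using bdd by blast
  define C where "C = max K 0 + 1"
  have C0: "C > 0" and KC: "K \<le> C - 1" by (auto simp: C_def)
  have dU: "\<forall>p\<in>{0<..} \<times> UNIV. u differentiable (at p)"
    and dP: "\<forall>b\<in>Basis. \<forall>p\<in>{0<..} \<times> UNIV. (\<lambda>q. frechet_derivative u (at q) b) differentiable (at p)"
    using C2 by (simp_all add: numeral_2_eq_2)
  show ?thesis
  proof (cases "t1 = 0")
    case True then show ?thesis using init by simp
  next
    case False
    then have t1p: "t1 > 0" using t1 by simp
    have main: "s * u (t1, x1) \<le> \<epsilon> * (exp (C * t1) * psi \<sigma> x1)" if \<epsilon>: "\<epsilon> > 0" for \<epsilon>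
    proof (rule ccontr)
      define W where "W p = s * u p - \<epsilon> * exp (C * fst p) * psi \<sigma> (snd p)" for p
      assume "\<not> ?thesis"
      then have W1: "W (t1, x1) > 0" by (simp add: W_def mult_ac)
      define R where "R = (\<bar>s\<bar> * \<bar>M\<bar>) / \<epsilon> + 1"
      have outside: "W (\<tau>, y) \<le> 0" if "\<tau> \<ge> 0" "R \<le> norm y" for \<tau> y
      proof (cases "\<tau> = 0")
        case True then show ?thesis using init psi_ge1[OF sg, of y] \<epsilon> by (simp add: W_def)
      next
        case False
        then have "\<tau> > 0" using that by simp
        then have "\<bar>u (\<tau>, y)\<bar> \<le> M" using M by auto
        then have "s * u (\<tau>, y) \<le> \<bar>s\<bar> * \<bar>M\<bar>"
        proof -
          have "s * u (\<tau>, y) \<le> \<bar>s\<bar> * \<bar>u (\<tau>, y)\<bar>" by (metis abs_ge_self abs_mult)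
          also have "\<dots> \<le> \<bar>s\<bar> * \<bar>M\<bar>" using \<open>\<bar>u (\<tau>, y)\<bar> \<le> M\<close> by (intro mult_left_mono) auto
          finally show ?thesis .
        qed
        also have "\<bar>s\<bar> * \<bar>M\<bar> \<le> \<epsilon> * R" using \<epsilon> by (simp add: R_def field_simps)
        also have "\<epsilon> * R \<le> \<epsilon> * psi \<sigma> y"
          using that psi_ge_norm[OF sg, of y] \<epsilon> by (intro mult_left_mono) auto
        also have "\<dots> \<le> \<epsilon> * exp (C * \<tau>) * psi \<sigma> y"
        proof -
          have "1 \<le> exp (C * \<tau>)" using C0 \<open>\<tau> > 0\<close> by simp
          moreover have "0 \<le> \<epsilon> * psi \<sigma> y" using \<epsilon> psi_ge1[OF sg, of y] by simp
          ultimately have "\<epsilon> * psi \<sigma> y * 1 \<le> \<epsilon> * psi \<sigma> y * exp (C * \<tau>)" by (intro mult_left_mono)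
          then show ?thesis by (simp add: mult_ac)
        qed
        finally show ?thesis by (simp add: W_def)
      qed
      define Ks where "Ks = {0..t1} \<times> cball (0::real^'n) R"
      have cK: "compact Ks" unfolding Ks_def by (intro compact_Times compact_Icc compact_cball)
      have contW: "continuous_on Ks W"
      proof -
        have "continuous_on Ks u" by (rule continuous_on_subset[OF cont]) (auto simp: Ks_def)
        moreover have "continuous_on Ks (\<lambda>p. psi \<sigma> (snd p))"
          by (rule continuous_on_compose2[OF psi_cont continuous_on_snd]) auto
        ultimately show ?thesis unfolding W_def by (intro continuous_intros) auto
      qed
      have x1R: "norm x1 < R" using outside[of t1 x1] W1 t1 by fastforce
      have inK1: "(t1, x1) \<in> Ks" using x1R t1 by (auto simp: Ks_def)
      obtain p0 where p0: "p0 \<in> Ks" "\<forall>q\<in>Ks. W q \<le> W p0"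
        using continuous_attains_sup[OF cK _ contW] inK1 by blast
      obtain t0 x0 where p0e: "p0 = (t0, x0)" by (cases p0)
      have Wp0: "W (t0, x0) > 0" using p0 inK1 W1 p0e by force
      have t0r: "0 \<le> t0" "t0 \<le> t1" "norm x0 \<le> R" using p0 p0e by (auto simp: Ks_def)
      have x0R: "norm x0 < R" using outside[of t0 x0] Wp0 t0r by fastforce
      have t0p: "t0 > 0"
      proof (rule ccontr)
        assume "\<not> t0 > 0" then have "t0 = 0" using t0r by simp
        then have "\<epsilon> * psi \<sigma> x0 < 0" using Wp0 init by (simp add: W_def)
        moreover have "\<epsilon> * psi \<sigma> x0 > 0" using psi_ge1[OF sg, of x0] \<epsilon> by simp
        ultimately show False by simp
      qed
      have maxW: "W q \<le> W (t0, x0)" if "q \<in> Ks" for q using p0 p0e that by simp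
      define c where "c = \<epsilon> * exp (C * t0)"
      have c0: "c > 0" using \<epsilon> by (simp add: c_def)
      define P where "P k y = frechet_derivative u (at (t0, y)) (0, axis k 1)" for k y
      have hU: "((\<lambda>z. u (t0, z)) has_derivative (\<lambda>v. \<Sum>k\<in>UNIV. v$k * P k y)) (at y)" for y
      proof -
        have du: "(u has_derivative frechet_derivative u (at (t0, y))) (at (t0, y))"
          using dU t0p by (auto simp: frechet_derivative_works)
        have i: "((\<lambda>z. (t0, z)) has_derivative (\<lambda>v. (0, v))) (at y)"
          by (intro has_derivative_Pair has_derivative_const has_derivative_ident)
        from has_derivative_compose[OF i du]
        have d: "((\<lambda>z. u (t0, z)) has_derivative (\<lambda>v. frechet_derivative u (at (t0, y)) (0, v))) (at y)"
          by (simp add: o_def)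
        have lin: "linear (\<lambda>v::real^'n. frechet_derivative u (at (t0, y)) (0, v))"
        proof -
          have "linear (frechet_derivative u (at (t0, y)))" using du has_derivative_linear by blast
          moreover have "linear (\<lambda>v::real^'n. ((0::real), v))" using has_derivative_linear[OF i] .
          ultimately show ?thesis using linear_compose[of "\<lambda>v::real^'n. ((0::real), v)"] by (simp add: o_def)
        qed
        have "(\<lambda>v. frechet_derivative u (at (t0, y)) (0, v)) = (\<lambda>v. \<Sum>k\<in>UNIV. v$k * P k y)"
        proof
          fix v
          show "frechet_derivative u (at (t0, y)) (0, v) = (\<Sum>k\<in>UNIV. v$k * P k y)"
            unfolding P_def by (rule lin_expand[OF lin, of v])
        qed
        with d show ?thesis by simp
      qed
      define DP where "DP k = frechet_derivative (P k) (at x0)" for k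
      have hP: "(P k has_derivative DP k) (at x0)" for k
      proof -
        have "(\<lambda>q. frechet_derivative u (at q) (0, axis k 1)) differentiable (at ((\<lambda>z. (t0, z)) x0))"
        proof -
          have "(t0, x0) \<in> {0<..} \<times> (UNIV :: (real^'n) set)" using t0p by simp
          from dP[rule_format, OF basis_0_axis this] show ?thesis by simp
        qed
        moreover have "(\<lambda>z::real^'n. (t0, z)) differentiable (at x0)"
          by (intro differentiable_Pair differentiable_const differentiable_ident)
        ultimately have "((\<lambda>q. frechet_derivative u (at q) (0, axis k 1)) \<circ> (\<lambda>z. (t0, z))) differentiable (at x0)"
          by (intro differentiable_chain_at)
        then have "P k differentiable (at x0)" by (simp add: o_def P_def[abs_def])
        then show ?thesis by (simp add: DP_def frechet_derivative_works)
      qed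
      define DX where "DX j k = frechet_derivative (\<lambda>y. X j y $ k) (at x0)" for j k
      have hX: "((\<lambda>y. X j y $ k) has_derivative DX j k) (at x0)" if "j < m" for j k
      proof -
        have "smooth_fun (\<lambda>y. X j y $ k)" using smooth that by (simp add: smooth_vf_def)
        then have "(\<lambda>y. X j y $ k) differentiable (at x0)" by (rule smooth_diff)
        then show ?thesis unfolding DX_def using frechet_derivative_works by blast
      qed
      have vfU: "vf_act (X j) (vf_act (X j) (\<lambda>z. u (t0, z))) x0 =
          (\<Sum>k\<in>UNIV. DX j k (X j x0) * P k x0 + X j x0 $ k * DP k (X j x0))" if "j < m" for j
        by (rule vf2_formula[OF hU hP hX[OF that]])
      have vfpsi: "vf_act (X j) (vf_act (X j) (psi \<sigma>)) x0 =
          (\<Sum>k\<in>UNIV. DX j k (X j x0) * phi1 \<sigma> k (x0$k) + X j x0 $ k * (phi2 \<sigma> k (x0$k) * X j x0 $ k))" if "j < m" for j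
      proof -
        have "\<forall>i. smooth_fun (\<lambda>y. X j y $ i)" using smooth that by (simp add: smooth_vf_def)
        from vf2_psi[OF this, of \<sigma> x0] show ?thesis by (simp add: vf_act_def[of _ "\<lambda>y. X j y $ _"] DX_def)
      qed
      define G where "G k y = s * P k y - c * phi1 \<sigma> k (y$k)" for k y
      define G' where "G' k v = s * DP k v - c * (phi2 \<sigma> k (x0$k) * v$k)" for k v
      have dF: "((\<lambda>y. s * u (t0, y) - c * psi \<sigma> y) has_derivative (\<lambda>v. \<Sum>k\<in>UNIV. v$k * G k y)) (at y)" for y
      proof -
        have "((\<lambda>y. s * u (t0, y) - c * psi \<sigma> y) has_derivative
           (\<lambda>v. s * (\<Sum>k\<in>UNIV. v$k * P k y) - c * (\<Sum>k\<in>UNIV. v$k * phi1 \<sigma> k (y$k)))) (at y)"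
          by (intro has_derivative_diff has_derivative_mult_right hU psi_deriv)
        moreover have "(\<lambda>v. s * (\<Sum>k\<in>UNIV. v$k * P k y) - c * (\<Sum>k\<in>UNIV. v$k * phi1 \<sigma> k (y$k)))
             = (\<lambda>v. \<Sum>k\<in>UNIV. v$k * G k y)"
          by (auto simp: G_def sum_distrib_left sum_subtractf[symmetric] algebra_simps intro!: ext sum.cong)
        ultimately show ?thesis by simp
      qed
      have dG: "(G k has_derivative G' k) (at x0)" for k
      proof -
        have "((\<lambda>y. s * P k y - c * phi1 \<sigma> k (y$k)) has_derivative
              (\<lambda>v. s * DP k v - c * (phi2 \<sigma> k (x0$k) * v$k))) (at x0)"
          by (intro has_derivative_diff has_derivative_mult_right hP phi1_coord_deriv)
        then show ?thesis by (simp add: G_def[abs_def] G'_def[abs_def])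
      qed
      have eR: "R - norm x0 > 0" using x0R by simp
      have mx: "\<forall>y\<in>ball x0 (R - norm x0). s * u (t0, y) - c * psi \<sigma> y \<le> s * u (t0, x0) - c * psi \<sigma> x0"
      proof
        fix y assume "y \<in> ball x0 (R - norm x0)"
        then have "norm y \<le> R" using norm_triangle_ineq2[of y x0] by (simp add: dist_norm norm_minus_commute)
        then have "(t0, y) \<in> Ks" using t0r by (auto simp: Ks_def)
        from maxW[OF this] show "s * u (t0, y) - c * psi \<sigma> y \<le> s * u (t0, x0) - c * psi \<sigma> x0"
          by (simp add: W_def c_def)
      qed
      have so: "(\<forall>k. G k x0 = 0) \<and> (\<Sum>k\<in>UNIV. a$k * G' k a) \<le> 0" for a
        by (rule second_order_max[OF dF dG eR mx])
      have each: "s * vf_act (X j) (vf_act (X j) (\<lambda>z. u (t0, z))) x0 - c * vf_act (X j) (vf_act (X j) (psi \<sigma>)) x0 \<le> 0"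
        if j: "j < m" for j
      proof -
        let ?a = "X j x0"
        have "s * vf_act (X j) (vf_act (X j) (\<lambda>z. u (t0, z))) x0 - c * vf_act (X j) (vf_act (X j) (psi \<sigma>)) x0
           = (\<Sum>k\<in>UNIV. DX j k ?a * G k x0) + (\<Sum>k\<in>UNIV. ?a$k * G' k ?a)"
          unfolding vfU[OF j] vfpsi[OF j] G_def G'_def
          by (simp add: sum_distrib_left sum_subtractf[symmetric] sum.distrib[symmetric] algebra_simps)
        also have "\<dots> \<le> 0" using so[of ?a] by simp
        finally show ?thesis .
      qed
      have sumj: "s * (\<Sum>j<m. vf_act (X j) (vf_act (X j) (\<lambda>z. u (t0, z))) x0) - c * (\<Sum>j<m. vf_act (X j) (vf_act (X j) (psi \<sigma>)) x0) \<le> 0"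
      proof -
        have "s * (\<Sum>j<m. vf_act (X j) (vf_act (X j) (\<lambda>z. u (t0, z))) x0) - c * (\<Sum>j<m. vf_act (X j) (vf_act (X j) (psi \<sigma>)) x0)
           = (\<Sum>j<m. s * vf_act (X j) (vf_act (X j) (\<lambda>z. u (t0, z))) x0 - c * vf_act (X j) (vf_act (X j) (psi \<sigma>)) x0)"
          by (simp add: sum_distrib_left sum_subtractf)
        also have "\<dots> \<le> 0" using each by (intro sum_nonpos) auto
        finally show ?thesis .
      qed
      define ut where "ut = frechet_derivative u (at (t0, x0)) (1, 0)"
      have dut: "((\<lambda>\<tau>. u (\<tau>, x0)) has_real_derivative ut) (at t0)"
      proof -
        have du: "(u has_derivative frechet_derivative u (at (t0, x0))) (at (t0, x0))"
          using dU t0p by (auto simp: frechet_derivative_works)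
        have i: "((\<lambda>\<tau>. (\<tau>, x0)) has_derivative (\<lambda>h. (h, 0))) (at t0)"
          by (intro has_derivative_Pair has_derivative_const has_derivative_ident)
        from has_derivative_compose[OF i du]
        have d: "((\<lambda>\<tau>. u (\<tau>, x0)) has_derivative (\<lambda>h. frechet_derivative u (at (t0, x0)) (h, 0))) (at t0)"
          by (simp add: o_def)
        have "linear (frechet_derivative u (at (t0, x0)))" using du has_derivative_linear by blast
        then have "frechet_derivative u (at (t0, x0)) (h, 0) = ut * h" for h
          using linear_scale[of "frechet_derivative u (at (t0, x0))" h "(1::real, 0::real^'n)"]
          by (simp add: ut_def mult.commute)
        with d show ?thesis by (simp add: has_field_derivative_def)
      qed
      have dh: "((\<lambda>\<tau>. W (\<tau>, x0)) has_real_derivative s * ut - \<epsilon> * (exp (C * t0) * C) * psi \<sigma> x0) (at t0)"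
        unfolding W_def fst_conv snd_conv
        by (auto intro!: derivative_eq_intros dut)
      have tm: "s * ut - \<epsilon> * (exp (C * t0) * C) * psi \<sigma> x0 \<ge> 0"
      proof (rule time_max[OF dh t0p], intro allI impI)
        fix \<tau> assume "0 < \<tau> \<and> \<tau> \<le> t0"
        then have "(\<tau>, x0) \<in> Ks" using t0r by (auto simp: Ks_def)
        then show "W (\<tau>, x0) \<le> W (t0, x0)" by (rule maxW)
      qed
      have heat: "(\<Sum>j<m. vf_act (X j) (vf_act (X j) (\<lambda>z. u (t0, z))) x0) = ut"
      proof -
        have "heat_op X m u (t0, x0) = 0" using sol t0p by auto
        moreover have "deriv (\<lambda>\<tau>. u (\<tau>, x0)) t0 = ut" using dut by (rule DERIV_imp_deriv)
        ultimately show ?thesis by (simp add: heat_op_def)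
      qed
      have ps1: "psi \<sigma> x0 \<ge> 1" using psi_ge1[OF sg] .
      have "c * C * psi \<sigma> x0 \<le> s * ut" using tm by (simp add: c_def mult_ac)
      also have "s * ut \<le> c * (\<Sum>j<m. vf_act (X j) (vf_act (X j) (psi \<sigma>)) x0)" using sumj heat by simp
      also have "\<dots> \<le> c * (K * psi \<sigma> x0)" using K c0 by (intro mult_left_mono) auto
      also have "\<dots> \<le> c * ((C - 1) * psi \<sigma> x0)" using KC ps1 c0 by (intro mult_left_mono mult_right_mono) auto
      finally have "c * psi \<sigma> x0 \<le> 0" by (simp add: algebra_simps)
      moreover have "c * psi \<sigma> x0 > 0" using c0 ps1 by simp
      ultimately show False by simp
    qed
    define E where "E = exp (C * t1) * psi \<sigma> x1"
    have E: "E > 0" using psi_ge1[OF sg, of x1] by (simp add: E_def)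
    show ?thesis
    proof (rule ccontr)
      assume "\<not> ?thesis"
      then have pos: "s * u (t1, x1) > 0" by simp
      define \<epsilon> where "\<epsilon> = s * u (t1, x1) / (2 * E)"
      have ep: "\<epsilon> > 0" using pos E unfolding \<epsilon>_def by (intro divide_pos_pos) auto
      have "\<epsilon> * E = s * u (t1, x1) / 2" using E unfolding \<epsilon>_def by (simp add: field_simps)
      then have "s * u (t1, x1) \<le> s * u (t1, x1) / 2" using main[OF ep] unfolding E_def by simp
      then show False using pos by simp
    qed
  qed
qed

theorem proposition4p2:
  fixes \<sigma> :: "'n::{finite,linorder} \<Rightarrow> real"
    and X :: "nat \<Rightarrow> 'n vf" and m :: nat
    and u :: "real \<times> ((real, 'n) vec) \<Rightarrow> real"
  assumes smooth: "\<forall>j<m. smooth_vf (X j)"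
    and indep: "vf_indep {..<m} X"
    and sigma_mono: "mono \<sigma>" and sigma_ge1: "\<forall>i. 1 \<le> \<sigma> i" and sigma_1: "\<exists>i. \<sigma> i = 1"
    and H1: "\<forall>r>0. \<forall>f. smooth_fun f \<longrightarrow> (\<forall>j<m. \<forall>x.
               vf_act (X j) (f \<circ> dil \<sigma> r) x = r * vf_act (X j) f (dil \<sigma> r x))"
    and H2: "dim ((\<lambda>Y. Y 0) ` lie_gen X m) = card (UNIV :: 'n set)"
    and big: "\<exists>B. B \<subseteq> lie_gen X m \<and> finite B \<and> card B = card (UNIV :: 'n set) + 1 \<and> vf_indep B (\<lambda>Y. Y)"
    and C2: "Ck_on 2 ({0<..} \<times> UNIV) u"
    and sol: "\<forall>p\<in>{0<..} \<times> UNIV. heat_op X m u p = 0"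
    and cont: "continuous_on ({0..} \<times> UNIV) u"
    and init: "\<forall>x. u (0, x) = 0"
    and bdd: "\<exists>M. \<forall>p\<in>{0<..} \<times> UNIV. \<bar>u p\<bar> \<le> M"
  shows "\<forall>p\<in>{0..} \<times> UNIV. u p = 0"
proof
  fix p :: "real \<times> (real, 'n) vec"
  assume p: "p \<in> {0..} \<times> UNIV"
  obtain t x where pe: "p = (t, x)" by (cases p)
  have t: "t \<ge> 0" using p pe by auto
  have a: "1 * u (t, x) \<le> 0"
    by (rule core[OF smooth sigma_ge1 H1 C2 sol cont init bdd t])
  have b: "(-1) * u (t, x) \<le> 0"
    by (rule core[OF smooth sigma_ge1 H1 C2 sol cont init bdd t])
  show "u p = 0" using a b pe by simp
qed

end
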